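(* Let a Cartesian mesh with cells $I_{ij}$ of sizes $\Delta x_i,\Delta y_j$ and cell averages $\overline{\bm{U}}^n_{ij}\in\mathcal{G}$ be given, and let $\Delta t^n\le\frac14\min_{i,j}\big(\Delta x_i/\alpha^n_{i+\frac12,j},\ \Delta y_j/\beta^n_{i,j+\frac12}\big)$. Let $\widehat{\bm{F}}^{\rm high}_{i+\frac12,j},\widehat{\bm{G}}^{\rm high}_{i,j+\frac12}\in\mathbb{R}^4$ be the high-order numerical fluxes, and let $\widehat{\bm{F}}^{\rm low},\widehat{\bm{G}}^{\rm low}$, the limited fluxes $\widehat{\bm{F}}^{\rm PCP},\widehat{\bm{G}}^{\rm PCP}$ and the states $\bm{U}^{\pm,\rm low}_{ij},\widetilde{\bm{U}}^{\pm,\rm low}_{ij}$ be as in the context. Assume $\bm{U}^{\pm,\rm low}_{ij},\widetilde{\bm{U}}^{\pm,\rm low}_{ij}\in\mathcal{G}$ for all $i,j$. Then for the scheme $$\overline{\bm{U}}^{n+1}_{ij}=\overline{\bm{U}}^n_{ij}-\frac{\Delta t^n}{\Delta x_i}\big(\widehat{\bm{F}}^{\rm PCP}_{i+\frac12,j}-\widehat{\bm{F}}^{\rm PCP}_{i-\frac12,j}\big)-\frac{\Delta t^n}{\Delta y_j}\big(\widehat{\bm{G}}^{\rm PCP}_{i,j+\frac12}-\widehat{\bm{G}}^{\rm PCP}_{i,j-\frac12}\big)$$ one has, for all $i,j$, $$\overline{\bm{U}}^{n+1}_{ij}=\tfrac14\big(\bm{U}^{+,\rm PCP}_{ij}+\bm{U}^{-,\rm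 PCP}_{ij}+\widetilde{\bm{U}}^{+,\rm PCP}_{ij}+\widetilde{\bm{U}}^{-,\rm PCP}_{ij}\big)\in\mathcal{G},$$ where $\bm{U}^{\pm,\rm PCP}_{ij}=\overline{\bm{U}}^n_{ij}\mp\frac{4\Delta t^n}{\Delta x_i}\widehat{\bm{F}}^{\rm PCP}_{i\pm\frac12,j}$ and $\widetilde{\bm{U}}^{\pm,\rm PCP}_{ij}=\overline{\bm{U}}^n_{ij}\mp\frac{4\Delta t^n}{\Delta y_j}\widehat{\bm{G}}^{\rm PCP}_{i,j\pm\frac12}$.
   Context: Setting: 2D special relativistic hydrodynamics ($c=1$), $\bm{U}_t+\bm{F}(\bm{U})_x+\bm{G}(\bm{U})_y=0$ with $\bm{U}=(D,\bm{m},E)^T$, $D=\rho\gamma$, $\bm{m}=\rho h\gamma^2\bm{u}$, $E=\rho h\gamma^2-p$, $h=1+e+p/\rho$, $p=(\Gamma-1)\rho e$, $\Gamma\in(1,2]$, $\gamma=(1-|\bm{u}|^2)^{-1/2}$, $\bm{F}=(Du_1,\bm{m}u_1+p\bm{e}_1,(E+p)u_1)^T$, $\bm{G}=(Du_2,\bm{m}u_2+p\bm{e}_2,(E+p)u_2)^T$. Admissible set $\mathcal{G}=\{\bm{U}: D>0,\ q(\bm{U})>0\}$ with $q(\bm{U})=E-\sqrt{D^2+|\bm{m}|^2}$. $\varrho^x,\varrho^y$ denote the spectral radii of $\partial\bm{F}/\partial\bm{U}$, $\partial\bm{G}/\partial\bm{U}$; $\alpha^n_{i+\frac12,j}=\max\{\varrho^x(\overline{\bm{U}}^n_{i+1,j}),\varrho^x(\overline{\bm{U}}^n_{ij})\}$,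 $\beta^n_{i,j+\frac12}=\max\{\varrho^y(\overline{\bm{U}}^n_{i,j+1}),\varrho^y(\overline{\bm{U}}^n_{ij})\}$. Low-order fluxes: $\widehat{\bm{F}}^{\rm low}_{i+\frac12,j}=\frac12\big(\bm{F}(\overline{\bm{U}}^n_{ij})+\bm{F}(\overline{\bm{U}}^n_{i+1,j})-\alpha^n_{i+\frac12,j}(\overline{\bm{U}}^n_{i+1,j}-\overline{\bm{U}}^n_{ij})\big)$, $\widehat{\bm{G}}^{\rm low}_{i,j+\frac12}$ analogous with $\bm{G}$, $\overline{\bm{U}}^n_{i,j+1}$, $\beta^n_{i,j+\frac12}$. The high-order fluxes $\widehat{\bm{F}}^{\rm high},\widehat{\bm{G}}^{\rm high}$ are given vectors (in the paper obtained by Gauss–Lobatto quadrature of 1D and 2D HLL fluxes evaluated at WENO-reconstructed states). For $\ast\in\{\rm low,high,D\}$ define $\bm{U}^{\pm,\ast}_{ij}=\overline{\bm{U}}^n_{ij}\mp\frac{4\Delta t^n}{\Delta x_i}\widehat{\bm{F}}^{\ast}_{i\pm\frac12,j}$, $\widetilde{\bm{U}}^{\pm,\ast}_{ij}=\overline{\bm{U}}^n_{ij}\mp\frac{4\Delta t^n}{\Delta y_j}\widehat{\bm{G}}^{\ast}_{i,j\pm\frac12}$, and write $D^{\pm,\ast}_{ij}$, $\widetilde D^{\pm,\ast}_{ij}$ for their first components. Fix $\varepsilon_D,\varepsilon_q>0$ with $D^{\pm,\rm low}_{ij},\widetilde D^{\pm,\rm low}_{ij}\ge\varepsilon_D$ and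 $q(\bm{U}^{\pm,\rm low}_{ij}),q(\widetilde{\bm{U}}^{\pm,\rm low}_{ij})\ge\varepsilon_q$ for all $i,j$. Limiter step (i): $\theta^{D,x,\pm}_{i+\frac12,j}=\frac{D^{\pm,\rm low}_{i+\frac12\mp\frac12,j}-\varepsilon_D}{D^{\pm,\rm low}_{i+\frac12\mp\frac12,j}-D^{\pm,\rm high}_{i+\frac12\mp\frac12,j}}$ if $D^{\pm,\rm high}_{i+\frac12\mp\frac12,j}<\varepsilon_D$ and $1$ otherwise (here $i+\frac12-\frac12=i$, $i+\frac12+\frac12=i+1$); $\theta^{D,x}_{i+\frac12,j}=\min\{\theta^{D,x,+}_{i+\frac12,j},\theta^{D,x,-}_{i+\frac12,j}\}$; $\widehat{\bm{F}}^{\rm D}_{i+\frac12,j}$ has first component $(1-\theta^{D,x}_{i+\frac12,j})\{\widehat{\bm{F}}^{\rm low}_{i+\frac12,j}\}_1+\theta^{D,x}_{i+\frac12,j}\{\widehat{\bm{F}}^{\rm high}_{i+\frac12,j}\}_1$ and other components equal to those of $\widehat{\bm{F}}^{\rm high}_{i+\frac12,j}$. $\theta^{D,y,\pm}_{i,j+\frac12}$, $\theta^{D,y}_{i,j+\frac12}$, $\widehat{\bm{G}}^{\rm D}_{i,j+\frac12}$ are defined analogously with $\widetilde D$, index $j$ and $\widehat{\bm{G}}$. Limiter step (ii): $\theta^{q,x,\pm}_{i+\frac12,j}=\frac{q(\bm{U}^{\pm,\rm low}_{i+\frac12\mp\frac12,j})-\varepsilon_q}{q(\bm{U}^{\pm,\rm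 low}_{i+\frac12\mp\frac12,j})-q(\bm{U}^{\pm,\rm D}_{i+\frac12\mp\frac12,j})}$ if $q(\bm{U}^{\pm,\rm D}_{i+\frac12\mp\frac12,j})<\varepsilon_q$ and $1$ otherwise; $\theta^{q,x}_{i+\frac12,j}=\min\{\theta^{q,x,+},\theta^{q,x,-}\}$; $\widehat{\bm{F}}^{\rm PCP}_{i+\frac12,j}=(1-\theta^{q,x}_{i+\frac12,j})\widehat{\bm{F}}^{\rm low}_{i+\frac12,j}+\theta^{q,x}_{i+\frac12,j}\widehat{\bm{F}}^{\rm D}_{i+\frac12,j}$; $\widehat{\bm{G}}^{\rm PCP}_{i,j+\frac12}$ analogously with $\widetilde{\bm{U}}$, $\widehat{\bm{G}}$. *)

theory Defs
  imports "HOL-Analysis.Analysis"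
begin

text \<open>Conservative states U = (D, m1, m2, E) are elements of real^4,
  with components U$1 = D, U$2 = m1, U$3 = m2, U$4 = E.\<close>

definition q_fun :: "real^4 \<Rightarrow> real" where
  "q_fun U = U$4 - sqrt ((U$1)\<^sup>2 + (U$2)\<^sup>2 + (U$3)\<^sup>2)"

definition rhd_admissible :: "real^4 \<Rightarrow> bool" where
  "rhd_admissible U \<longleftrightarrow> U$1 > 0 \<and> q_fun U > 0"

definition cons_of_prim :: "real \<Rightarrow> real \<Rightarrow> real \<Rightarrow> real \<Rightarrow> real \<Rightarrow> real^4" where
  "cons_of_prim \<Gamma> \<rho> u1 u2 p =
     (let e = p / ((\<Gamma> - 1) * \<rho>);
          h = 1 + e + p / \<rho>;
          \<gamma> = 1 / sqrt (1 - u1\<^sup>2 - u2\<^sup>2)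
      in vector [\<rho> * \<gamma>, \<rho> * h * \<gamma>\<^sup>2 * u1, \<rho> * h * \<gamma>\<^sup>2 * u2, \<rho> * h * \<gamma>\<^sup>2 - p])"

definition prim_of_cons :: "real \<Rightarrow> real^4 \<Rightarrow> real \<times> real \<times> real \<times> real" where
  "prim_of_cons \<Gamma> U = (THE V. case V of (\<rho>, u1, u2, p) \<Rightarrow>
      \<rho> > 0 \<and> p > 0 \<and> u1\<^sup>2 + u2\<^sup>2 < 1 \<and> cons_of_prim \<Gamma> \<rho> u1 u2 p = U)"

definition flux_F :: "real \<Rightarrow> real^4 \<Rightarrow> real^4" where
  "flux_F \<Gamma> U = (case prim_of_cons \<Gamma> U of (\<rho>, u1, u2, p) \<Rightarrow>
      vector [U$1 * u1, U$2 * u1 + p, U$3 * u1, (U$4 + p) * u1])"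

definition flux_G :: "real \<Rightarrow> real^4 \<Rightarrow> real^4" where
  "flux_G \<Gamma> U = (case prim_of_cons \<Gamma> U of (\<rho>, u1, u2, p) \<Rightarrow>
      vector [U$1 * u2, U$2 * u2, U$3 * u2 + p, (U$4 + p) * u2])"

definition spec_radius :: "real^'n^'n \<Rightarrow> real" where
  "spec_radius A = Max {cmod z | z. det (mat z - (\<chi> i j. complex_of_real (A$i$j))) = 0}"

definition rho_x :: "real \<Rightarrow> real^4 \<Rightarrow> real" where
  "rho_x \<Gamma> U = spec_radius (matrix (frechet_derivative (flux_F \<Gamma>) (at U)))"

definition rho_y :: "real \<Rightarrow> real^4 \<Rightarrow> real" where
  "rho_y \<Gamma> U = spec_radius (matrix (frechet_derivative (flux_G \<Gamma>) (at U)))"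

text \<open>An x-interface quantity indexed (i,j)
  lives at i+1/2, j (between cells (i,j) and (i+1,j)); a y-interface quantity indexed
  (i,j) lives at i, j+1/2 (between cells (i,j) and (i,j+1)).\<close>

definition alpha_x :: "real \<Rightarrow> (int \<Rightarrow> int \<Rightarrow> real^4) \<Rightarrow> int \<Rightarrow> int \<Rightarrow> real" where
  "alpha_x \<Gamma> Ub i j = max (rho_x \<Gamma> (Ub (i+1) j)) (rho_x \<Gamma> (Ub i j))"

definition beta_y :: "real \<Rightarrow> (int \<Rightarrow> int \<Rightarrow> real^4) \<Rightarrow> int \<Rightarrow> int \<Rightarrow> real" where
  "beta_y \<Gamma> Ub i j = max (rho_y \<Gamma> (Ub i (j+1))) (rho_y \<Gamma> (Ub i j))"

definition F_low :: "real \<Rightarrow> (int \<Rightarrow> int \<Rightarrow> real^4) \<Rightarrow> int \<Rightarrow> int \<Rightarrow> real^4" where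
  "F_low \<Gamma> Ub i j = (1/2) *\<^sub>R (flux_F \<Gamma> (Ub i j) + flux_F \<Gamma> (Ub (i+1) j)
       - alpha_x \<Gamma> Ub i j *\<^sub>R (Ub (i+1) j - Ub i j))"

definition G_low :: "real \<Rightarrow> (int \<Rightarrow> int \<Rightarrow> real^4) \<Rightarrow> int \<Rightarrow> int \<Rightarrow> real^4" where
  "G_low \<Gamma> Ub i j = (1/2) *\<^sub>R (flux_G \<Gamma> (Ub i j) + flux_G \<Gamma> (Ub i (j+1))
       - beta_y \<Gamma> Ub i j *\<^sub>R (Ub i (j+1) - Ub i j))"

definition plus_state :: "real^4 \<Rightarrow> real \<Rightarrow> real^4 \<Rightarrow> real^4" where
  "plus_state U0 lam Fr = U0 - (4 * lam) *\<^sub>R Fr"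

definition minus_state :: "real^4 \<Rightarrow> real \<Rightarrow> real^4 \<Rightarrow> real^4" where
  "minus_state U0 lam Fl = U0 + (4 * lam) *\<^sub>R Fl"

definition theta_lim :: "real \<Rightarrow> real \<Rightarrow> real \<Rightarrow> real" where
  "theta_lim \<epsilon> vlow vhigh = (if vhigh < \<epsilon> then (vlow - \<epsilon>) / (vlow - vhigh) else 1)"

text \<open>Limiter at one interface.  UL, lamL: average and dt/dx of the cell on the left
  (lower) side; UR, lamR: those of the right (upper) side; Fl, Fh: low and high fluxes.\<close>
definition theta_D :: "real \<Rightarrow> real^4 \<Rightarrow> real \<Rightarrow> real^4 \<Rightarrow> real \<Rightarrow> real^4 \<Rightarrow> real^4 \<Rightarrow> real" where
  "theta_D \<epsilon>D UL lamL UR lamR Fl Fh =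
     min (theta_lim \<epsilon>D (plus_state UL lamL Fl $ 1) (plus_state UL lamL Fh $ 1))
         (theta_lim \<epsilon>D (minus_state UR lamR Fl $ 1) (minus_state UR lamR Fh $ 1))"

definition flux_D :: "real \<Rightarrow> real^4 \<Rightarrow> real \<Rightarrow> real^4 \<Rightarrow> real \<Rightarrow> real^4 \<Rightarrow> real^4 \<Rightarrow> real^4" where
  "flux_D \<epsilon>D UL lamL UR lamR Fl Fh =
     (let \<theta> = theta_D \<epsilon>D UL lamL UR lamR Fl Fh
      in (\<chi> k. if k = 1 then (1 - \<theta>) * Fl $ 1 + \<theta> * Fh $ 1 else Fh $ k))"

definition theta_q :: "real \<Rightarrow> real \<Rightarrow> real^4 \<Rightarrow> real \<Rightarrow> real^4 \<Rightarrow> real \<Rightarrow> real^4 \<Rightarrow> real^4 \<Rightarrow> real" where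
  "theta_q \<epsilon>D \<epsilon>q UL lamL UR lamR Fl Fh =
     (let FD = flux_D \<epsilon>D UL lamL UR lamR Fl Fh
      in min (theta_lim \<epsilon>q (q_fun (plus_state UL lamL Fl)) (q_fun (plus_state UL lamL FD)))
             (theta_lim \<epsilon>q (q_fun (minus_state UR lamR Fl)) (q_fun (minus_state UR lamR FD))))"

definition flux_PCP :: "real \<Rightarrow> real \<Rightarrow> real^4 \<Rightarrow> real \<Rightarrow> real^4 \<Rightarrow> real \<Rightarrow> real^4 \<Rightarrow> real^4 \<Rightarrow> real^4" where
  "flux_PCP \<epsilon>D \<epsilon>q UL lamL UR lamR Fl Fh =
     (let \<theta> = theta_q \<epsilon>D \<epsilon>q UL lamL UR lamR Fl Fh;
          FD = flux_D \<epsilon>D UL lamL UR lamR Fl Fh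
      in (1 - \<theta>) *\<^sub>R Fl + \<theta> *\<^sub>R FD)"

definition F_PCP :: "real \<Rightarrow> real \<Rightarrow> real \<Rightarrow> (int \<Rightarrow> int \<Rightarrow> real^4) \<Rightarrow> real \<Rightarrow> (int \<Rightarrow> real)
     \<Rightarrow> (int \<Rightarrow> int \<Rightarrow> real^4) \<Rightarrow> int \<Rightarrow> int \<Rightarrow> real^4" where
  "F_PCP \<Gamma> \<epsilon>D \<epsilon>q Ub dt dx Fhigh i j =
     flux_PCP \<epsilon>D \<epsilon>q (Ub i j) (dt / dx i) (Ub (i+1) j) (dt / dx (i+1))
       (F_low \<Gamma> Ub i j) (Fhigh i j)"

definition G_PCP :: "real \<Rightarrow> real \<Rightarrow> real \<Rightarrow> (int \<Rightarrow> int \<Rightarrow> real^4) \<Rightarrow> real \<Rightarrow> (int \<Rightarrow> real)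
     \<Rightarrow> (int \<Rightarrow> int \<Rightarrow> real^4) \<Rightarrow> int \<Rightarrow> int \<Rightarrow> real^4" where
  "G_PCP \<Gamma> \<epsilon>D \<epsilon>q Ub dt dy Ghigh i j =
     flux_PCP \<epsilon>D \<epsilon>q (Ub i j) (dt / dy j) (Ub i (j+1)) (dt / dy (j+1))
       (G_low \<Gamma> Ub i j) (Ghigh i j)"

end

theory Submission
  imports Defs
begin

definition nv :: "real^4 \<Rightarrow> real \<times> real \<times> real" where
  "nv U = (U$1, U$2, U$3)"

lemma norm_nv: "norm (nv U) = sqrt ((U$1)\<^sup>2 + (U$2)\<^sup>2 + (U$3)\<^sup>2)"
  by (simp add: nv_def norm_prod_def add.assoc)

lemma q_nv: "q_fun U = U$4 - norm (nv U)"
  by (simp add: q_fun_def norm_nv)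

lemma nv_add: "nv (A + B) = nv A + nv B" by (simp add: nv_def)
lemma nv_scale: "nv (c *\<^sub>R A) = c *\<^sub>R nv A" by (simp add: nv_def)

lemma q_concave:
  assumes "0 \<le> t" "t \<le> 1"
  shows "(1-t) * q_fun A + t * q_fun B \<le> q_fun ((1-t) *\<^sub>R A + t *\<^sub>R B)"
proof -
  have "norm (nv ((1-t) *\<^sub>R A + t *\<^sub>R B)) = norm ((1-t) *\<^sub>R nv A + t *\<^sub>R nv B)"
    by (simp add: nv_add nv_scale)
  also have "\<dots> \<le> norm ((1-t) *\<^sub>R nv A) + norm (t *\<^sub>R nv B)"
    by (rule norm_triangle_ineq)
  also have "\<dots> = (1-t) * norm (nv A) + t * norm (nv B)" using assms by simp
  finally have "norm (nv ((1-t) *\<^sub>R A + t *\<^sub>R B)) \<le> (1-t) * norm (nv A) + t * norm (nv B)" .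
  moreover have "((1-t) *\<^sub>R A + t *\<^sub>R B) $ 4 = (1-t) * A$4 + t * B$4" by simp
  ultimately show ?thesis unfolding q_nv by (simp add: algebra_simps)
qed

lemma q_avg4:
  "(q_fun A + q_fun B + q_fun C + q_fun D) / 4 \<le> q_fun ((1/4) *\<^sub>R (A + B + C + D))"
proof -
  have "norm (nv ((1/4) *\<^sub>R (A + B + C + D))) = (1/4) * norm (nv A + nv B + nv C + nv D)"
    by (simp add: nv_add nv_scale)
  also have "\<dots> \<le> (1/4) * (norm (nv A) + norm (nv B) + norm (nv C) + norm (nv D))"
    by (intro mult_left_mono) (auto intro!: norm_triangle_le add_mono)
  finally have "norm (nv ((1/4) *\<^sub>R (A + B + C + D))) \<le> (1/4) * (norm (nv A) + norm (nv B) + norm (nv C) + norm (nv D))" .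
  moreover have "((1/4) *\<^sub>R (A + B + C + D)) $ 4 = (A$4 + B$4 + C$4 + D$4) / 4" by simp
  ultimately show ?thesis unfolding q_nv by (simp add: field_simps)
qed

lemma tl01: "\<epsilon> \<le> low \<Longrightarrow> 0 \<le> theta_lim \<epsilon> low high \<and> theta_lim \<epsilon> low high \<le> 1"
  by (auto simp: theta_lim_def divide_simps)

lemma tl2:
  assumes "\<epsilon> \<le> low" "0 \<le> t" "t \<le> theta_lim \<epsilon> low high"
  shows "\<epsilon> \<le> (1-t)*low + t*high"
proof (cases "high < \<epsilon>")
  case True
  then have "t * (low - high) \<le> low - \<epsilon>" using assms
    by (auto simp: theta_lim_def pos_le_divide_eq)
  then show ?thesis by (simp add: algebra_simps)
next
  case False
  then have "t \<le> 1" using assms by (simp add: theta_lim_def)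
  have "(1-t)*\<epsilon> + t*\<epsilon> \<le> (1-t)*low + t*high"
    using assms False \<open>t \<le> 1\<close> by (intro add_mono mult_left_mono) auto
  then show ?thesis by (simp add: algebra_simps)
qed

lemma minus_plus: "minus_state U lam F = plus_state U (-lam) F"
  by (simp add: minus_state_def plus_state_def)

lemma ps_comb: "plus_state U lam ((1-t) *\<^sub>R A + t *\<^sub>R B)
   = (1-t) *\<^sub>R plus_state U lam A + t *\<^sub>R plus_state U lam B"
  by (simp add: plus_state_def algebra_simps)

lemma ps_D1: "plus_state U lam (flux_D e UL lamL UR lamR Fl Fh) $ 1
   = (1 - theta_D e UL lamL UR lamR Fl Fh) * (plus_state U lam Fl $ 1)
     + theta_D e UL lamL UR lamR Fl Fh * (plus_state U lam Fh $ 1)"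
  by (simp add: plus_state_def flux_D_def Let_def algebra_simps)

lemma side:
  fixes l1 l2 :: real and U1 U2 :: "real^4"
  defines "P1 \<equiv> plus_state U1 l1" and "P2 \<equiv> plus_state U2 l2"
  assumes e: "0 < eD" "0 < eq"
    and h1: "eD \<le> P1 Fl $ 1" "eq \<le> q_fun (P1 Fl)"
    and h2: "eD \<le> P2 Fl $ 1" "eq \<le> q_fun (P2 Fl)"
  shows "rhd_admissible (P1 (flux_PCP eD eq U1 l1 U2 (-l2) Fl Fh))
       \<and> rhd_admissible (P2 (flux_PCP eD eq U1 l1 U2 (-l2) Fl Fh))"
proof -
  have m: "minus_state U2 (-l2) = P2" by (rule ext) (simp add: minus_plus P2_def)
  define tD where "tD = theta_D eD U1 l1 U2 (-l2) Fl Fh"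
  define FD where "FD = flux_D eD U1 l1 U2 (-l2) Fl Fh"
  define tq where "tq = theta_q eD eq U1 l1 U2 (-l2) Fl Fh"
  have tD: "tD = min (theta_lim eD (P1 Fl $ 1) (P1 Fh $ 1)) (theta_lim eD (P2 Fl $ 1) (P2 Fh $ 1))"
    unfolding tD_def theta_D_def m P1_def ..
  have tq: "tq = min (theta_lim eq (q_fun (P1 Fl)) (q_fun (P1 FD))) (theta_lim eq (q_fun (P2 Fl)) (q_fun (P2 FD)))"
    unfolding tq_def theta_q_def m P1_def FD_def Let_def ..
  have tD0: "0 \<le> tD" "tD \<le> 1" using tl01[OF h1(1)] tl01[OF h2(1)] tD by (auto simp: min_def)
  have tq0: "0 \<le> tq" "tq \<le> 1" using tl01[OF h1(2)] tl01[OF h2(2)] tq by (auto simp: min_def)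
  have D1: "eD \<le> P1 FD $ 1"
    using ps_D1[of U1 l1 eD U1 l1 U2 "-l2" Fl Fh] tl2[OF h1(1) tD0(1)] tD
    unfolding P1_def FD_def tD_def by simp
  have D2: "eD \<le> P2 FD $ 1"
    using ps_D1[of U2 l2 eD U1 l1 U2 "-l2" Fl Fh] tl2[OF h2(1) tD0(1)] tD
    unfolding P2_def FD_def tD_def by simp
  have pcp: "flux_PCP eD eq U1 l1 U2 (-l2) Fl Fh = (1-tq) *\<^sub>R Fl + tq *\<^sub>R FD"
    unfolding flux_PCP_def tq_def FD_def Let_def ..
  have gen: "rhd_admissible (P (flux_PCP eD eq U1 l1 U2 (-l2) Fl Fh))"
    if P: "P = plus_state U l" and hD: "eD \<le> P Fl $ 1" "eD \<le> P FD $ 1"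
      and hq: "eq \<le> q_fun (P Fl)" and tqle: "tq \<le> theta_lim eq (q_fun (P Fl)) (q_fun (P FD))"
    for P U l
  proof -
    have eqn: "P (flux_PCP eD eq U1 l1 U2 (-l2) Fl Fh) = (1-tq) *\<^sub>R P Fl + tq *\<^sub>R P FD"
      unfolding pcp P by (rule ps_comb)
    have "(1-tq)*eD + tq*eD \<le> (1-tq) * (P Fl $ 1) + tq * (P FD $ 1)"
      using tq0 hD by (intro add_mono mult_left_mono) auto
    then have d: "0 < ((1-tq) *\<^sub>R P Fl + tq *\<^sub>R P FD) $ 1" using e by (simp add: algebra_simps)
    have "eq \<le> (1-tq) * q_fun (P Fl) + tq * q_fun (P FD)" by (rule tl2[OF hq tq0(1) tqle])
    also have "\<dots> \<le> q_fun ((1-tq) *\<^sub>R P Fl + tq *\<^sub>R P FD)" using q_concave tq0 by blast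
    finally show ?thesis using d e unfolding eqn rhd_admissible_def by simp
  qed
  show ?thesis
  proof
    show "rhd_admissible (P1 (flux_PCP eD eq U1 l1 U2 (-l2) Fl Fh))"
      by (rule gen[OF meta_eq_to_obj_eq[OF P1_def] h1(1) D1 h1(2)]) (simp add: tq)
    show "rhd_admissible (P2 (flux_PCP eD eq U1 l1 U2 (-l2) Fl Fh))"
      by (rule gen[OF meta_eq_to_obj_eq[OF P2_def] h2(1) D2 h2(2)]) (simp add: tq)
  qed
qed

lemma side2:
  assumes "0 < eD" "0 < eq"
    "eD \<le> plus_state U1 l1 Fl $ 1" "eq \<le> q_fun (plus_state U1 l1 Fl)"
    "eD \<le> minus_state U2 l2 Fl $ 1" "eq \<le> q_fun (minus_state U2 l2 Fl)"
  shows "rhd_admissible (plus_state U1 l1 (flux_PCP eD eq U1 l1 U2 l2 Fl Fh))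
       \<and> rhd_admissible (minus_state U2 l2 (flux_PCP eD eq U1 l1 U2 l2 Fl Fh))"
  using side[of eD eq U1 l1 Fl U2 "-l2" Fh] assms by (simp add: minus_plus)

theorem theorem3:
  fixes \<Gamma> dt \<epsilon>D \<epsilon>q :: real
    and dx dy :: "int \<Rightarrow> real"
    and Ub Fhigh Ghigh :: "int \<Rightarrow> int \<Rightarrow> real^4"
  assumes Gamma: "1 < \<Gamma>" "\<Gamma> \<le> 2"
    and mesh: "\<forall>i. 0 < dx i" "\<forall>j. 0 < dy j"
    and dt_pos: "0 < dt"
    and avg_adm: "\<forall>i j. rhd_admissible (Ub i j)"
    and CFL: "\<forall>i j. dt \<le> (1/4) * (dx i / alpha_x \<Gamma> Ub i j)
                  \<and> dt \<le> (1/4) * (dy j / beta_y \<Gamma> Ub i j)"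
    and eps: "0 < \<epsilon>D" "0 < \<epsilon>q"
    and low_adm: "\<forall>i j.
         rhd_admissible (plus_state (Ub i j) (dt / dx i) (F_low \<Gamma> Ub i j))
       \<and> rhd_admissible (minus_state (Ub i j) (dt / dx i) (F_low \<Gamma> Ub (i-1) j))
       \<and> rhd_admissible (plus_state (Ub i j) (dt / dy j) (G_low \<Gamma> Ub i j))
       \<and> rhd_admissible (minus_state (Ub i j) (dt / dy j) (G_low \<Gamma> Ub i (j-1)))"
    and low_eps: "\<forall>i j.
         \<epsilon>D \<le> plus_state (Ub i j) (dt / dx i) (F_low \<Gamma> Ub i j) $ 1
       \<and> \<epsilon>D \<le> minus_state (Ub i j) (dt / dx i) (F_low \<Gamma> Ub (i-1) j) $ 1
       \<and> \<epsilon>D \<le> plus_state (Ub i j) (dt / dy j) (G_low \<Gamma> Ub i j) $ 1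
       \<and> \<epsilon>D \<le> minus_state (Ub i j) (dt / dy j) (G_low \<Gamma> Ub i (j-1)) $ 1
       \<and> \<epsilon>q \<le> q_fun (plus_state (Ub i j) (dt / dx i) (F_low \<Gamma> Ub i j))
       \<and> \<epsilon>q \<le> q_fun (minus_state (Ub i j) (dt / dx i) (F_low \<Gamma> Ub (i-1) j))
       \<and> \<epsilon>q \<le> q_fun (plus_state (Ub i j) (dt / dy j) (G_low \<Gamma> Ub i j))
       \<and> \<epsilon>q \<le> q_fun (minus_state (Ub i j) (dt / dy j) (G_low \<Gamma> Ub i (j-1)))"
  shows "\<forall>i j.
     (let F = F_PCP \<Gamma> \<epsilon>D \<epsilon>q Ub dt dx Fhigh;
          G = G_PCP \<Gamma> \<epsilon>D \<epsilon>q Ub dt dy Ghigh;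
          Unew = Ub i j - (dt / dx i) *\<^sub>R (F i j - F (i-1) j)
                        - (dt / dy j) *\<^sub>R (G i j - G i (j-1))
      in Unew = (1/4) *\<^sub>R (plus_state (Ub i j) (dt / dx i) (F i j)
                          + minus_state (Ub i j) (dt / dx i) (F (i-1) j)
                          + plus_state (Ub i j) (dt / dy j) (G i j)
                          + minus_state (Ub i j) (dt / dy j) (G i (j-1)))
         \<and> rhd_admissible Unew)"
proof (intro allI)
  fix i j
  define F where "F = F_PCP \<Gamma> \<epsilon>D \<epsilon>q Ub dt dx Fhigh"
  define G where "G = G_PCP \<Gamma> \<epsilon>D \<epsilon>q Ub dt dy Ghigh"
  have a1: "rhd_admissible (plus_state (Ub i j) (dt / dx i) (F i j))"
    using side2[OF eps, of "Ub i j" "dt / dx i" "F_low \<Gamma> Ub i j" "Ub (i+1) j" "dt / dx (i+1)" "Fhigh i j"]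
      low_eps[rule_format, of i j] low_eps[rule_format, of "i+1" j]
    unfolding F_def F_PCP_def by simp
  have a2: "rhd_admissible (minus_state (Ub i j) (dt / dx i) (F (i-1) j))"
    using side2[OF eps, of "Ub (i-1) j" "dt / dx (i-1)" "F_low \<Gamma> Ub (i-1) j" "Ub i j" "dt / dx i" "Fhigh (i-1) j"]
      low_eps[rule_format, of i j] low_eps[rule_format, of "i-1" j]
    unfolding F_def F_PCP_def by simp
  have a3: "rhd_admissible (plus_state (Ub i j) (dt / dy j) (G i j))"
    using side2[OF eps, of "Ub i j" "dt / dy j" "G_low \<Gamma> Ub i j" "Ub i (j+1)" "dt / dy (j+1)" "Ghigh i j"]
      low_eps[rule_format, of i j] low_eps[rule_format, of i "j+1"]
    unfolding G_def G_PCP_def by simp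
  have a4: "rhd_admissible (minus_state (Ub i j) (dt / dy j) (G i (j-1)))"
    using side2[OF eps, of "Ub i (j-1)" "dt / dy (j-1)" "G_low \<Gamma> Ub i (j-1)" "Ub i j" "dt / dy j" "Ghigh i (j-1)"]
      low_eps[rule_format, of i j] low_eps[rule_format, of i "j-1"]
    unfolding G_def G_PCP_def by simp
  define A where "A = plus_state (Ub i j) (dt / dx i) (F i j)"
  define B where "B = minus_state (Ub i j) (dt / dx i) (F (i-1) j)"
  define C where "C = plus_state (Ub i j) (dt / dy j) (G i j)"
  define D where "D = minus_state (Ub i j) (dt / dy j) (G i (j-1))"
  have eq: "Ub i j - (dt / dx i) *\<^sub>R (F i j - F (i-1) j) - (dt / dy j) *\<^sub>R (G i j - G i (j-1))
      = (1/4) *\<^sub>R (A + B + C + D)"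
    unfolding A_def B_def C_def D_def plus_state_def minus_state_def
    by (simp add: vec_eq_iff algebra_simps)
  have adm: "rhd_admissible ((1/4) *\<^sub>R (A + B + C + D))"
  proof -
    have d: "0 < ((1/4) *\<^sub>R (A + B + C + D)) $ 1"
      using a1 a2 a3 a4 unfolding A_def B_def C_def D_def rhd_admissible_def by simp
    have "0 < (q_fun A + q_fun B + q_fun C + q_fun D) / 4"
      using a1 a2 a3 a4 unfolding A_def B_def C_def D_def rhd_admissible_def by simp
    then show ?thesis using q_avg4[of A B C D] d unfolding rhd_admissible_def by linarith
  qed
  show "let F = F_PCP \<Gamma> \<epsilon>D \<epsilon>q Ub dt dx Fhigh;
          G = G_PCP \<Gamma> \<epsilon>D \<epsilon>q Ub dt dy Ghigh;
          Unew = Ub i j - (dt / dx i) *\<^sub>R (F i j - F (i-1) j)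
                        - (dt / dy j) *\<^sub>R (G i j - G i (j-1))
      in Unew = (1/4) *\<^sub>R (plus_state (Ub i j) (dt / dx i) (F i j)
                          + minus_state (Ub i j) (dt / dx i) (F (i-1) j)
                          + plus_state (Ub i j) (dt / dy j) (G i j)
                          + minus_state (Ub i j) (dt / dy j) (G i (j-1)))
         \<and> rhd_admissible Unew"
    unfolding Let_def F_def[symmetric] G_def[symmetric]
    using eq adm unfolding A_def B_def C_def D_def by simp
qed

end
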